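(* If $G$ is a graph of girth at least $7$, then $\chi_{\mu_2}(G)\ge \gamma(G)$.
   Context: The girth of $G$ is the length of a shortest cycle (infinite for forests). $\gamma(G)$ is the domination number: the minimum size of a set $D\subseteq V(G)$ such that every vertex outside $D$ has a neighbor in $D$. A set $M\subseteq V(G)$ is a $2$-distance mutual-visibility set if for every two vertices $u,v\in M$ there exists a shortest $u,v$-path of length at most $2$ none of whose internal vertices lies in $M$. $\chi_{\mu_2}(G)$ is the minimum cardinality of a partition of $V(G)$ into $2$-distance mutual-visibility sets. *)

theory Defs
  imports Main "HOL-Library.Extended_Nat" "HOL-Library.Disjoint_Sets"
begin

definition graph :: "'a set \<Rightarrow> ('a \<Rightarrow> 'a \<Rightarrow> bool) \<Rightarrow> bool" where
  "graph V E \<longleftrightarrow> finite V \<and> (\<forall>u v. E u v \<longrightarrow> u \<in> V \<and> v \<in> V)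
     \<and> (\<forall>u v. E u v \<longrightarrow> E v u) \<and> (\<forall>u. \<not> E u u)"

definition is_cycle :: "'a set \<Rightarrow> ('a \<Rightarrow> 'a \<Rightarrow> bool) \<Rightarrow> 'a list \<Rightarrow> bool" where
  "is_cycle V E cs \<longleftrightarrow> length cs \<ge> 3 \<and> distinct cs \<and> set cs \<subseteq> V
     \<and> (\<forall>i < length cs. E (cs ! i) (cs ! ((i + 1) mod length cs)))"

text \<open>Girth: length of a shortest cycle; infinite (\<infinity>) if there is no cycle.\<close>

definition girth :: "'a set \<Rightarrow> ('a \<Rightarrow> 'a \<Rightarrow> bool) \<Rightarrow> enat" where
  "girth V E = Inf {enat (length cs) | cs. is_cycle V E cs}"

definition is_path :: "'a set \<Rightarrow> ('a \<Rightarrow> 'a \<Rightarrow> bool) \<Rightarrow> 'a \<Rightarrow> 'a \<Rightarrow> 'a list \<Rightarrow> bool" where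
  "is_path V E u v xs \<longleftrightarrow> xs \<noteq> [] \<and> hd xs = u \<and> last xs = v \<and> distinct xs
     \<and> set xs \<subseteq> V \<and> (\<forall>i. Suc i < length xs \<longrightarrow> E (xs ! i) (xs ! Suc i))"

definition path_len :: "'a list \<Rightarrow> nat" where
  "path_len xs = length xs - 1"

definition gdist :: "'a set \<Rightarrow> ('a \<Rightarrow> 'a \<Rightarrow> bool) \<Rightarrow> 'a \<Rightarrow> 'a \<Rightarrow> nat" where
  "gdist V E u v = (LEAST n. \<exists>xs. is_path V E u v xs \<and> path_len xs = n)"

definition is_shortest_path :: "'a set \<Rightarrow> ('a \<Rightarrow> 'a \<Rightarrow> bool) \<Rightarrow> 'a \<Rightarrow> 'a \<Rightarrow> 'a list \<Rightarrow> bool" where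
  "is_shortest_path V E u v xs \<longleftrightarrow> is_path V E u v xs \<and> path_len xs = gdist V E u v"

definition internal :: "'a list \<Rightarrow> 'a set" where
  "internal xs = set (butlast (tl xs))"

definition mutual_vis2 :: "'a set \<Rightarrow> ('a \<Rightarrow> 'a \<Rightarrow> bool) \<Rightarrow> 'a set \<Rightarrow> bool" where
  "mutual_vis2 V E M \<longleftrightarrow> M \<subseteq> V \<and> (\<forall>u\<in>M. \<forall>v\<in>M.
     \<exists>xs. is_shortest_path V E u v xs \<and> path_len xs \<le> 2 \<and> internal xs \<inter> M = {})"

definition chi_mu2 :: "'a set \<Rightarrow> ('a \<Rightarrow> 'a \<Rightarrow> bool) \<Rightarrow> nat" where
  "chi_mu2 V E = (LEAST k. \<exists>P. partition_on V P \<and> card P = k \<and> (\<forall>M\<in>P. mutual_vis2 V E M))"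

definition dominating :: "'a set \<Rightarrow> ('a \<Rightarrow> 'a \<Rightarrow> bool) \<Rightarrow> 'a set \<Rightarrow> bool" where
  "dominating V E D \<longleftrightarrow> D \<subseteq> V \<and> (\<forall>v \<in> V - D. \<exists>d\<in>D. E v d)"

definition domination_number :: "'a set \<Rightarrow> ('a \<Rightarrow> 'a \<Rightarrow> bool) \<Rightarrow> nat" where
  "domination_number V E = (LEAST n. \<exists>D. dominating V E D \<and> card D = n)"

end

theory Submission
  imports Defs
begin

lemma girth_cyc:
  assumes "girth V E \<ge> 7" "is_cycle V E cs" "length cs \<le> 6"
  shows False
proof -
  have "enat (length cs) \<in> {enat (length cs) | cs. is_cycle V E cs}" using assms(2) by blast
  then have "girth V E \<le> enat (length cs)"
    unfolding girth_def by (rule Inf_lower)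
  with assms(1) have "7 \<le> enat (length cs)" by (rule order_trans)
  then have "7 \<le> length cs" by (simp add: numeral_eq_enat)
  with assms(3) show False by simp
qed


lemma gfacts:
  assumes "graph V E"
  shows "\<And>x y. E x y \<Longrightarrow> E y x" "\<And>x. \<not> E x x" "\<And>x y. E x y \<Longrightarrow> x \<in> V" "\<And>x y. E x y \<Longrightarrow> y \<in> V"
  using assms unfolding graph_def by blast+

lemma c3:
  assumes "graph V E" "girth V E \<ge> 7" "E a b" "E b c" "E c a"
  shows False
proof -
  note g = gfacts[OF assms(1)]
  have "is_cycle V E [a,b,c]" unfolding is_cycle_def
  proof (intro conjI)
    show "distinct [a,b,c]" using assms(3-) g(2) by auto
    show "set [a,b,c] \<subseteq> V" using assms(3-) g(3) by auto
    show "\<forall>i<length [a,b,c]. E ([a,b,c] ! i) ([a,b,c] ! ((i + 1) mod length [a,b,c]))"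
    proof (intro allI impI)
      fix i assume "i < length [a,b,c]"
      then have "i < 3" by simp
      then have "i = 0 \<or> i = 1 \<or> i = 2" by arith
      then show "E ([a,b,c] ! i) ([a,b,c] ! ((i + 1) mod length [a,b,c]))"
        using assms(3-) by (elim disjE) simp_all
    qed
  qed simp
  then show False by (rule girth_cyc[OF assms(2)]) simp
qed

lemma c4:
  assumes "graph V E" "girth V E \<ge> 7" "E a b" "E b c" "E c d" "E d a" "a \<noteq> c" "b \<noteq> d"
  shows False
proof -
  note g = gfacts[OF assms(1)]
  have "is_cycle V E [a,b,c,d]" unfolding is_cycle_def
  proof (intro conjI)
    show "distinct [a,b,c,d]" using assms(3-) g(2) by auto
    show "set [a,b,c,d] \<subseteq> V" using assms(3-) g(3) by auto
    show "\<forall>i<length [a,b,c,d]. E ([a,b,c,d] ! i) ([a,b,c,d] ! ((i + 1) mod length [a,b,c,d]))"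
    proof (intro allI impI)
      fix i assume "i < length [a,b,c,d]"
      then have "i < 4" by simp
      then have "i = 0 \<or> i = 1 \<or> i = 2 \<or> i = 3" by arith
      then show "E ([a,b,c,d] ! i) ([a,b,c,d] ! ((i + 1) mod length [a,b,c,d]))"
        using assms(3-) by (elim disjE) simp_all
    qed
  qed simp
  then show False by (rule girth_cyc[OF assms(2)]) simp
qed

lemma c5:
  assumes "graph V E" "girth V E \<ge> 7" "E a b" "E b c" "E c d" "E d e" "E e a"
    "a \<noteq> c" "a \<noteq> d" "b \<noteq> d" "b \<noteq> e" "c \<noteq> e"
  shows False
proof -
  note g = gfacts[OF assms(1)]
  have "is_cycle V E [a,b,c,d,e]" unfolding is_cycle_def
  proof (intro conjI)
    show "distinct [a,b,c,d,e]" using assms(3-) g(2) by auto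
    show "set [a,b,c,d,e] \<subseteq> V" using assms(3-) g(3) by auto
    show "\<forall>i<length [a,b,c,d,e]. E ([a,b,c,d,e] ! i) ([a,b,c,d,e] ! ((i + 1) mod length [a,b,c,d,e]))"
    proof (intro allI impI)
      fix i assume "i < length [a,b,c,d,e]"
      then have "i < 5" by simp
      then have "i = 0 \<or> i = 1 \<or> i = 2 \<or> i = 3 \<or> i = 4" by arith
      then show "E ([a,b,c,d,e] ! i) ([a,b,c,d,e] ! ((i + 1) mod length [a,b,c,d,e]))"
        using assms(3-) by (elim disjE) simp_all
    qed
  qed simp
  then show False by (rule girth_cyc[OF assms(2)]) simp
qed

lemma c6:
  assumes "graph V E" "girth V E \<ge> 7" "E a b" "E b c" "E c d" "E d e" "E e f" "E f a"
    "a \<noteq> c" "a \<noteq> d" "a \<noteq> e" "b \<noteq> d" "b \<noteq> e" "b \<noteq> f" "c \<noteq> e" "c \<noteq> f" "d \<noteq> f"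
  shows False
proof -
  note g = gfacts[OF assms(1)]
  have "is_cycle V E [a,b,c,d,e,f]" unfolding is_cycle_def
  proof (intro conjI)
    show "distinct [a,b,c,d,e,f]" using assms(3-) g(2) by auto
    show "set [a,b,c,d,e,f] \<subseteq> V" using assms(3-) g(3) by auto
    show "\<forall>i<length [a,b,c,d,e,f]. E ([a,b,c,d,e,f] ! i) ([a,b,c,d,e,f] ! ((i + 1) mod length [a,b,c,d,e,f]))"
    proof (intro allI impI)
      fix i assume "i < length [a,b,c,d,e,f]"
      then have "i < 6" by simp
      then have "i = 0 \<or> i = 1 \<or> i = 2 \<or> i = 3 \<or> i = 4 \<or> i = 5" by arith
      then show "E ([a,b,c,d,e,f] ! i) ([a,b,c,d,e,f] ! ((i + 1) mod length [a,b,c,d,e,f]))"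
        using assms(3-) by (elim disjE) simp_all
    qed
  qed simp
  then show False by (rule girth_cyc[OF assms(2)]) simp
qed


lemma key:
  assumes G: "graph V E" and gi: "girth V E \<ge> 7" and MV: "M \<subseteq> V" and ne: "M \<noteq> {}"
    and cl: "\<forall>u\<in>M. \<forall>v\<in>M. u \<noteq> v \<longrightarrow> E u v \<or> (\<exists>c. E u c \<and> E c v)"
  shows "\<exists>x\<in>V. \<forall>w\<in>M. w = x \<or> E w x"
proof -
  note g = gfacts[OF G]
  have sym: "E x y \<Longrightarrow> E y x" for x y using g(1) by blast
  have irr: "\<not> E x x" for x using g(2) by blast
  from ne obtain u where uM: "u \<in> M" by blast
  show ?thesis
  proof (cases "\<exists>v\<in>M. E u v")
    case True
    then obtain v where vM: "v \<in> M" and uv: "E u v" by blast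
    have uneqv: "u \<noteq> v" using uv irr by blast
    have L1: "E w v" if "w \<in> M" "w \<noteq> u" "w \<noteq> v" "\<not> E w u" for w
    proof (rule ccontr)
      assume nwv: "\<not> E w v"
      from cl that(1,2) uM that(4) obtain a where wa: "E w a" and au: "E a u" by blast
      from cl that(1,3) vM nwv obtain b where wb: "E w b" and bv: "E b v" by blast
      have "a \<noteq> v" using nwv wa by blast
      have "b \<noteq> u" using that(4) wb by blast
      show False
      proof (cases "a = b")
        case True
        then show False using c3[OF G gi, of a u v] au uv sym[OF bv] by blast
      next
        case False
        show False
          by (rule c5[OF G gi wa au uv sym[OF bv] sym[OF wb]])
             (use that \<open>a \<noteq> v\<close> \<open>b \<noteq> u\<close> False in auto)
      qed
    qed
    have L2: "E w u" if "w \<in> M" "w \<noteq> u" "w \<noteq> v" "\<not> E w v" for w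
    proof (rule ccontr)
      assume nwu: "\<not> E w u"
      from cl that(1,3) vM that(4) obtain a where wa: "E w a" and av: "E a v" by blast
      from cl that(1,2) uM nwu obtain b where wb: "E w b" and bu: "E b u" by blast
      have "a \<noteq> u" using nwu wa by blast
      have "b \<noteq> v" using that(4) wb by blast
      show False
      proof (cases "a = b")
        case True
        then show False using c3[OF G gi, of a u v] av uv bu sym by blast
      next
        case False
        show False
          by (rule c5[OF G gi wa av sym[OF uv] sym[OF bu] sym[OF wb]])
             (use that \<open>a \<noteq> u\<close> \<open>b \<noteq> v\<close> False in auto)
      qed
    qed
    show ?thesis
    proof (rule ccontr)
      assume "\<not> ?thesis"
      moreover have "u \<in> V" "v \<in> V" using uM vM MV by auto
      ultimately obtain w1 w2 where w1: "w1 \<in> M" "w1 \<noteq> u" "\<not> E w1 u"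
        and w2: "w2 \<in> M" "w2 \<noteq> v" "\<not> E w2 v" by blast
      have "w1 \<noteq> v" using w1 uv sym by blast
      have "w2 \<noteq> u" using w2 uv by blast
      have e1: "E w1 v" using L1 w1 \<open>w1 \<noteq> v\<close> by blast
      have e2: "E w2 u" using L2 w2 \<open>w2 \<noteq> u\<close> by blast
      have "w1 \<noteq> w2" using e1 w2 by blast
      then have "E w1 w2 \<or> (\<exists>c. E w1 c \<and> E c w2)" using cl w1 w2 by blast
      then show False
      proof
        assume "E w1 w2"
        show False
          by (rule c4[OF G gi e1 sym[OF uv] sym[OF e2] sym[OF \<open>E w1 w2\<close>]])
             (use w1 w2 in auto)
      next
        assume "\<exists>c. E w1 c \<and> E c w2"
        then obtain c where c1: "E w1 c" and c2: "E c w2" by blast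
        have "c \<noteq> u" using c1 w1 by blast
        have "c \<noteq> v" using c2 w2 sym by blast
        show False
          by (rule c5[OF G gi e1 sym[OF uv] sym[OF e2] sym[OF c2] sym[OF c1]])
             (use w1 w2 \<open>w1 \<noteq> w2\<close> \<open>c \<noteq> u\<close> \<open>c \<noteq> v\<close> in auto)
      qed
    qed
  next
    case False
    then have nu: "\<And>v. v \<in> M \<Longrightarrow> \<not> E u v" by blast
    show ?thesis
    proof (cases "M = {u}")
      case True
      then show ?thesis using uM MV by auto
    next
      case False
      then obtain v0 where v0: "v0 \<in> M" "v0 \<noteq> u" using uM ne by blast
      have "E u v0 \<or> (\<exists>c. E u c \<and> E c v0)" using cl uM v0 by metis
      then obtain x where ux: "E u x" and xv0: "E x v0" using nu v0(1) by blast
      have "x \<in> V" using ux g(4) by blast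
      moreover have "w = x \<or> E w x" if wM: "w \<in> M" for w
      proof (cases "w = u \<or> w = v0")
        case True
        then show ?thesis using ux xv0 sym by blast
      next
        case False
        then have wu: "w \<noteq> u" and wv0: "w \<noteq> v0" by auto
        have nuw: "\<not> E u w" using nu wM by blast
        have "E u w \<or> (\<exists>c. E u c \<and> E c w)" using cl uM wM wu by metis
        then obtain b where ub: "E u b" and bw: "E b w" using nuw by blast
        show ?thesis
        proof (rule ccontr)
          assume nwx: "\<not> (w = x \<or> E w x)"
          have "b \<noteq> x" using bw nwx sym by blast
          have "x \<noteq> w" using ux nuw by blast
          have "v0 \<noteq> b" using ub nu v0 by blast
          have "E v0 w \<or> (\<exists>c. E v0 c \<and> E c w)" using cl v0 wM wv0 by metis
          then show False
          proof
            assume "E v0 w"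
            show False
              by (rule c5[OF G gi ux xv0 \<open>E v0 w\<close> sym[OF bw] sym[OF ub]])
                 (use v0 wu \<open>b \<noteq> x\<close> \<open>x \<noteq> w\<close> \<open>v0 \<noteq> b\<close> in auto)
          next
            assume "\<exists>c. E v0 c \<and> E c w"
            then obtain c where vc: "E v0 c" and cw: "E c w" by blast
            have "c \<noteq> u" using vc nu v0 sym by blast
            have "c \<noteq> x" using cw nwx sym by blast
            show False
            proof (cases "c = b")
              case True
              show False
                by (rule c4[OF G gi ux xv0, of b]) (use vc True sym[OF ub] v0 \<open>b \<noteq> x\<close> in auto)
            next
              case False
              show False
                by (rule c6[OF G gi ux xv0 vc cw sym[OF bw] sym[OF ub]])
                   (use v0 wu wv0 \<open>b \<noteq> x\<close> \<open>x \<noteq> w\<close> \<open>v0 \<noteq> b\<close> \<open>c \<noteq> u\<close> \<open>c \<noteq> x\<close> False in auto)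
            qed
          qed
        qed
      qed
      ultimately show ?thesis by blast
    qed
  qed
qed


lemma mv_close:
  assumes "mutual_vis2 V E M" "u \<in> M" "v \<in> M" "u \<noteq> v"
  shows "E u v \<or> (\<exists>c. E u c \<and> E c v)"
proof -
  obtain xs where p: "is_path V E u v xs" and l: "path_len xs \<le> 2"
    using assms(1-3) unfolding mutual_vis2_def is_shortest_path_def by blast
  have ne: "xs \<noteq> []" and h: "hd xs = u" and la: "last xs = v"
    and ed: "\<forall>i. Suc i < length xs \<longrightarrow> E (xs ! i) (xs ! Suc i)"
    using p unfolding is_path_def by auto
  have len: "length xs \<le> 3" using l ne unfolding path_len_def by auto
  show ?thesis
  proof (cases xs)
    case Nil then show ?thesis using ne by simp
  next
    case (Cons a ys)
    show ?thesis
    proof (cases ys)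
      case Nil then show ?thesis using Cons h la assms(4) by simp
    next
      case (Cons b zs)
      show ?thesis
      proof (cases zs)
        case Nil
        then show ?thesis using Cons \<open>xs = a # ys\<close> h la ed[rule_format, of 0] by simp
      next
        case (Cons c ws)
        then have "ws = []" using len \<open>ys = b # zs\<close> \<open>xs = a # ys\<close> by simp
        then show ?thesis using Cons \<open>ys = b # zs\<close> \<open>xs = a # ys\<close> h la
            ed[rule_format, of 0] ed[rule_format, of 1] by auto
      qed
    qed
  qed
qed

lemma mv_single: "v \<in> V \<Longrightarrow> mutual_vis2 V E {v}"
proof -
  assume v: "v \<in> V"
  have pth: "is_path V E v v [v]" using v unfolding is_path_def by simp
  have "gdist V E v v = 0" unfolding gdist_def
    by (rule Least_eq_0) (rule exI[of _ "[v]"], simp add: pth path_len_def)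
  then have "is_shortest_path V E v v [v]" using pth
    unfolding is_shortest_path_def path_len_def by simp
  then show ?thesis using v unfolding mutual_vis2_def internal_def path_len_def by auto
qed

theorem theorem3p4:
  fixes V :: "'a set" and E :: "'a \<Rightarrow> 'a \<Rightarrow> bool"
  assumes "graph V E"
    and "girth V E \<ge> 7"
  shows "chi_mu2 V E \<ge> domination_number V E"
proof -
  have finV: "finite V" using assms(1) unfolding graph_def by blast
  have ex: "\<exists>k P. partition_on V P \<and> card P = k \<and> (\<forall>M\<in>P. mutual_vis2 V E M)"
    by (rule exI[of _ "card ((\<lambda>x. {x}) ` V)"], rule exI[of _ "(\<lambda>x. {x}) ` V"]) (simp add: partition_on_singletons mv_single)
  obtain P where P: "partition_on V P" "card P = chi_mu2 V E" "\<forall>M\<in>P. mutual_vis2 V E M"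
    using LeastI_ex[OF ex] unfolding chi_mu2_def by auto
  have finP: "finite P" using finite_elements[OF finV P(1)] .
  have "\<forall>M\<in>P. \<exists>x\<in>V. \<forall>w\<in>M. w = x \<or> E w x"
  proof
    fix M assume MP: "M \<in> P"
    have MV: "M \<subseteq> V" using P(1) MP partition_onD1 by blast
    have ne: "M \<noteq> {}" using P(1) MP partition_onD3 by blast
    show "\<exists>x\<in>V. \<forall>w\<in>M. w = x \<or> E w x"
      by (rule key[OF assms MV ne]) (use mv_close[OF P(3)[rule_format, OF MP]] in blast)
  qed
  then obtain f where f: "\<forall>M\<in>P. f M \<in> V \<and> (\<forall>w\<in>M. w = f M \<or> E w (f M))"
    using bchoice[of P "\<lambda>M x. x \<in> V \<and> (\<forall>w\<in>M. w = x \<or> E w x)"] by blast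
  have dom: "dominating V E (f ` P)"
    unfolding dominating_def
  proof (intro conjI ballI)
    show "f ` P \<subseteq> V" using f by blast
  next
    fix v assume v: "v \<in> V - f ` P"
    then obtain M where MP: "M \<in> P" and vM: "v \<in> M" using partition_onD1[OF P(1)] by blast
    have "v = f M \<or> E v (f M)" using f MP vM by blast
    moreover have "v \<noteq> f M" using v MP by blast
    ultimately show "\<exists>d\<in>f ` P. E v d" using MP by blast
  qed
  have "domination_number V E \<le> card (f ` P)"
    unfolding domination_number_def by (rule Least_le) (use dom in blast)
  also have "\<dots> \<le> card P" using card_image_le[OF finP] .
  finally show ?thesis using P(2) by simp
qed

end
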